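(* Let $q$ be a prime number, let $l\ge 2$ be an integer and let $N=q^{l}$. Then $$\mathbb{Q}\text{-}\mathcal{KS}(N)=\Bigl(\bigcup_{s\in\mathbb{Z}\setminus\{0\}}\Bigl\{\,q+\frac{d}{s}\;:\; d \text{ a positive integer with } d\mid (q^{l}-q)\Bigr\}\Bigr)\setminus\{0,N\}.$$
   Context: Every nonzero rational $\alpha$ is written $\alpha=\alpha_1/\alpha_2$ with $\alpha_1\in\mathbb{Z}$, $\alpha_2$ a positive integer and $\gcd(\alpha_1,\alpha_2)=1$. For an integer $N\ge 2$ and a nonzero rational $\alpha=\alpha_1/\alpha_2$, $N$ is called an $\alpha$-Korselt number if $N\neq\alpha$ and $\alpha_2p-\alpha_1$ divides $\alpha_2N-\alpha_1$ (in $\mathbb{Z}$) for every prime divisor $p$ of $N$. For a subset $\mathbb{A}\subseteq\mathbb{Q}$, the Korselt set $\mathbb{A}\text{-}\mathcal{KS}(N)$ is the set of all $\beta\in\mathbb{A}\setminus\{0,N\}$ such that $N$ is a $\beta$-Korselt number. Here $a\mid b$ means $b=ac$ for some integer $c$. *)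

theory Defs
  imports Complex_Main "HOL-Computational_Algebra.Primes"
begin

definition korselt :: "rat \<Rightarrow> nat \<Rightarrow> bool" where
  "korselt \<alpha> N \<longleftrightarrow> \<alpha> \<noteq> 0 \<and> of_nat N \<noteq> \<alpha> \<and>
     (let (a1, a2) = quotient_of \<alpha> in
       \<forall>p. prime p \<and> p dvd N \<longrightarrow> (a2 * int p - a1) dvd (a2 * int N - a1))"

definition korselt_set :: "rat set \<Rightarrow> nat \<Rightarrow> rat set" where
  "korselt_set A N = {\<beta> \<in> A - {0, of_nat N}. korselt \<beta> N}"

end

theory Submission
  imports Defs
begin

lemma cop_aux:
  fixes a1 a2 Q :: int
  assumes "coprime a1 a2"
  shows "coprime (a2 * Q - a1) a2"
proof (rule coprimeI)
  fix c assume c1: "c dvd a2 * Q - a1" and c2: "c dvd a2"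
  have "c dvd a2 * Q" using c2 by simp
  then have "c dvd a2 * Q - (a2 * Q - a1)" using c1 by (rule dvd_diff)
  then have "c dvd a1" by simp
  then show "is_unit c" using c2 assms by (meson coprime_common_divisor)
qed

lemma key:
  fixes q l :: nat and \<alpha> :: rat and a1 a2 :: int
  assumes q: "prime q" and l: "l \<ge> 2" and qa: "quotient_of \<alpha> = (a1, a2)"
  shows "korselt \<alpha> (q ^ l) \<longleftrightarrow> \<alpha> \<noteq> 0 \<and> \<alpha> \<noteq> of_nat (q ^ l) \<and>
           (a2 * int q - a1) dvd (int q ^ l - int q)"
proof -
  have cop: "coprime (a2 * int q - a1) a2"
    using cop_aux quotient_of_coprime[OF qa] by blast
  have pd: "(\<forall>p. prime p \<and> p dvd q ^ l \<longrightarrow> P p) \<longleftrightarrow> P q" for P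
  proof
    assume "\<forall>p. prime p \<and> p dvd q ^ l \<longrightarrow> P p"
    moreover have "q dvd q ^ l" using l by (simp add: dvd_power)
    ultimately show "P q" using q by blast
  next
    assume "P q"
    moreover have "prime p \<and> p dvd q ^ l \<Longrightarrow> p = q" for p
      using q by (metis prime_dvd_power primes_dvd_imp_eq)
    ultimately show "\<forall>p. prime p \<and> p dvd q ^ l \<longrightarrow> P p" by blast
  qed
  have eq: "a2 * int (q ^ l) - a1 = (a2 * int q - a1) + a2 * (int q ^ l - int q)"
    by (simp add: algebra_simps)
  have "(a2 * int q - a1) dvd (a2 * int (q ^ l) - a1) \<longleftrightarrow>
        (a2 * int q - a1) dvd (a2 * (int q ^ l - int q))"
    unfolding eq by (simp add: dvd_add_right_iff)
  also have "\<dots> \<longleftrightarrow> (a2 * int q - a1) dvd (int q ^ l - int q)"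
    using cop by (simp add: coprime_dvd_mult_right_iff)
  finally have D: "(a2 * int q - a1) dvd (a2 * int (q ^ l) - a1) \<longleftrightarrow>
        (a2 * int q - a1) dvd (int q ^ l - int q)" .
  show ?thesis
    unfolding korselt_def qa Let_def prod.case
      pd[of "\<lambda>p. (a2 * int p - a1) dvd (a2 * int (q ^ l) - a1)"] D
    by blast
qed

theorem theorem3p1:
  fixes q l :: nat
  assumes "prime q" and "l \<ge> 2"
  shows "korselt_set UNIV (q ^ l) =
    (\<Union>s\<in>{s::int. s \<noteq> 0}.
       {of_nat q + of_int d / of_int s | d::int. d > 0 \<and> d dvd (int q ^ l - int q)})
    - {0, of_nat (q ^ l)}"
proof (rule set_eqI)
  fix \<alpha> :: rat
  obtain a1 a2 where qa: "quotient_of \<alpha> = (a1, a2)" by fastforce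
  have a2pos: "a2 > 0" using quotient_of_denom_pos[OF qa] .
  have \<alpha>eq: "\<alpha> = of_int a1 / of_int a2" using quotient_of_div[OF qa] .
  have cop: "coprime (a2 * int q - a1) a2"
    using cop_aux quotient_of_coprime[OF qa] by blast
  have q1: "int q > 1" using assms(1) prime_gt_1_nat by auto
  have qlq: "int q ^ l - int q \<noteq> 0"
  proof -
    have "int q ^ 1 < int q ^ l" using q1 assms(2) by (intro power_strict_increasing) auto
    then show ?thesis by simp
  qed
  let ?m = "a2 * int q - a1"
  have "(\<exists>s d. s \<noteq> 0 \<and> d > 0 \<and> d dvd (int q ^ l - int q) \<and> \<alpha> = of_nat q + of_int d / of_int s)
        \<longleftrightarrow> ?m dvd (int q ^ l - int q)" (is "?L \<longleftrightarrow> ?R")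
  proof
    assume ?L
    then obtain s d where s: "s \<noteq> 0" and d: "d > 0" "d dvd (int q ^ l - int q)"
      and ad: "\<alpha> = of_nat q + of_int d / of_int s" by blast
    have "of_int a1 / of_int a2 = (of_int (int q * s + d) / of_int s :: rat)"
      using ad \<alpha>eq s by (simp add: field_simps)
    then have "of_int (a1 * s) = (of_int ((int q * s + d) * a2) :: rat)"
      using s a2pos by (simp add: field_simps)
    then have "a1 * s = (int q * s + d) * a2" by (simp only: of_int_eq_iff)
    then have "- ?m * s = d * a2" by (simp add: algebra_simps)
    then have "?m dvd d * a2" by (metis dvd_triv_left minus_mult_left dvd_minus_iff)
    then have "?m dvd d" using cop by (simp add: coprime_dvd_mult_left_iff)
    then show ?R using d(2) dvd_trans by blast
  next
    assume R: ?R
    have m0: "?m \<noteq> 0" using R qlq by auto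
    define s where "s = - a2 * sgn ?m"
    have s0: "s \<noteq> 0" using m0 a2pos by (simp add: s_def sgn_0_0)
    have p0: "\<bar>?m\<bar> > 0" using m0 by simp
    have dd: "\<bar>?m\<bar> dvd (int q ^ l - int q)" using R by simp
    have ae: "\<alpha> = of_nat q + of_int \<bar>?m\<bar> / of_int s"
    proof -
      have "of_int \<bar>?m\<bar> / of_int s = (- of_int ?m / of_int a2 :: rat)"
        using m0 a2pos unfolding s_def
        by (cases "?m > 0") (auto simp: field_simps)
      moreover have "(of_nat q :: rat) + - of_int ?m / of_int a2 = of_int a1 / of_int a2"
        using a2pos by (simp add: field_simps)
      ultimately show ?thesis using \<alpha>eq by simp
    qed
    show ?L by (rule exI[of _ s], rule exI[of _ "\<bar>?m\<bar>"]) (intro conjI s0 p0 dd ae)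
  qed
  then have LR: "?L \<longleftrightarrow> ?R" .
  have K: "\<alpha> \<in> korselt_set UNIV (q ^ l) \<longleftrightarrow> \<alpha> \<noteq> 0 \<and> \<alpha> \<noteq> of_nat (q ^ l) \<and> ?R"
    unfolding korselt_set_def mem_Collect_eq Diff_iff insert_iff empty_iff key[OF assms qa] by blast
  have U: "\<alpha> \<in> (\<Union>s\<in>{s::int. s \<noteq> 0}.
       {of_nat q + of_int d / of_int s | d::int. d > 0 \<and> d dvd (int q ^ l - int q)})
    \<longleftrightarrow> ?L"
    unfolding UN_iff mem_Collect_eq Bex_def
  proof
    assume "\<exists>x. x \<noteq> 0 \<and> (\<exists>d. \<alpha> = of_nat q + of_int d / of_int x \<and> d > 0 \<and> d dvd (int q ^ l - int q))"
    then obtain x d where h: "x \<noteq> 0" "\<alpha> = of_nat q + of_int d / of_int x" "d > 0" "d dvd (int q ^ l - int q)"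
      by (elim exE conjE) (rule that)
    show ?L by (rule exI[of _ x], rule exI[of _ d]) (intro conjI h)
  next
    assume ?L
    then obtain x d where h: "x \<noteq> 0" "\<alpha> = of_nat q + of_int d / of_int x" "d > 0" "d dvd (int q ^ l - int q)"
      by (elim exE conjE) (rule that)
    show "\<exists>x. x \<noteq> 0 \<and> (\<exists>d. \<alpha> = of_nat q + of_int d / of_int x \<and> d > 0 \<and> d dvd (int q ^ l - int q))"
      by (rule exI[of _ x], intro conjI h(1), rule exI[of _ d]) (intro conjI h)
  qed
  show "\<alpha> \<in> korselt_set UNIV (q ^ l) \<longleftrightarrow> \<alpha> \<in> (\<Union>s\<in>{s::int. s \<noteq> 0}.
       {of_nat q + of_int d / of_int s | d::int. d > 0 \<and> d dvd (int q ^ l - int q)})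
    - {0, of_nat (q ^ l)}"
    by (simp only: K U LR Diff_iff insert_iff empty_iff de_Morgan_disj not_False_eq_True simp_thms) (simp only: conj_ac)
qed

end
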